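(* Let $G$ be a graph and $uv$ an edge of $G$. If $G$ admits a tree 3-spanner with 5-center $u,v$, then $G$ admits a $uv$-concentrated tree 3-spanner.
   Context: Graphs are finite, simple and loopless. A tree 3-spanner of $G$ is a spanning subgraph $T$ of $G$ that is a tree and satisfies $d_T(a,b)\le 3\,d_G(a,b)$ for all vertices $a,b$ of $G$. A 5-center of a tree $T$ is a pair of vertices $u,v$ that are adjacent in $T$ and such that every vertex of $T$ is within $T$-distance 2 of $u$ or of $v$. A tree 3-spanner $T$ of $G$ is $uv$-concentrated if all three of the following hold: (1) $u,v$ is a 5-center of $T$; (2) every $G$-neighbour $w$ of $u$ with $d_T(w,u)<d_T(w,v)$ is a $T$-neighbour of $u$; (3) every $G$-neighbour $w$ of $v$ with $d_T(w,v)<d_T(w,u)$ is a $T$-neighbour of $v$. *)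

theory Defs
  imports Main "HOL-Library.Extended_Nat"
begin

definition simple_graph :: "'a set \<Rightarrow> 'a set set \<Rightarrow> bool" where
  "simple_graph V E \<longleftrightarrow> finite V \<and> (\<forall>e\<in>E. \<exists>a b. e = {a, b} \<and> a \<noteq> b \<and> a \<in> V \<and> b \<in> V)"

definition walk :: "'a set \<Rightarrow> 'a set set \<Rightarrow> 'a list \<Rightarrow> bool" where
  "walk V E p \<longleftrightarrow> p \<noteq> [] \<and> set p \<subseteq> V \<and> (\<forall>i. Suc i < length p \<longrightarrow> {p ! i, p ! Suc i} \<in> E)"

definition gdist :: "'a set \<Rightarrow> 'a set set \<Rightarrow> 'a \<Rightarrow> 'a \<Rightarrow> enat" where
  "gdist V E a b = (INF p \<in> {p. walk V E p \<and> hd p = a \<and> last p = b}. enat (length p - 1))"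

definition connected_graph :: "'a set \<Rightarrow> 'a set set \<Rightarrow> bool" where
  "connected_graph V E \<longleftrightarrow> (\<forall>a\<in>V. \<forall>b\<in>V. \<exists>p. walk V E p \<and> hd p = a \<and> last p = b)"

definition has_cycle :: "'a set \<Rightarrow> 'a set set \<Rightarrow> bool" where
  "has_cycle V E \<longleftrightarrow> (\<exists>p. walk V E p \<and> distinct p \<and> length p \<ge> 3 \<and> {last p, hd p} \<in> E)"

definition is_tree :: "'a set \<Rightarrow> 'a set set \<Rightarrow> bool" where
  "is_tree V T \<longleftrightarrow> simple_graph V T \<and> connected_graph V T \<and> \<not> has_cycle V T"

definition tree_3_spanner :: "'a set \<Rightarrow> 'a set set \<Rightarrow> 'a set set \<Rightarrow> bool" where
  "tree_3_spanner V E T \<longleftrightarrow> T \<subseteq> E \<and> is_tree V T \<and>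
     (\<forall>a\<in>V. \<forall>b\<in>V. gdist V T a b \<le> 3 * gdist V E a b)"

definition five_center :: "'a set \<Rightarrow> 'a set set \<Rightarrow> 'a \<Rightarrow> 'a \<Rightarrow> bool" where
  "five_center V T u v \<longleftrightarrow> u \<in> V \<and> v \<in> V \<and> {u, v} \<in> T \<and>
     (\<forall>w\<in>V. gdist V T w u \<le> 2 \<or> gdist V T w v \<le> 2)"

definition concentrated :: "'a set \<Rightarrow> 'a set set \<Rightarrow> 'a set set \<Rightarrow> 'a \<Rightarrow> 'a \<Rightarrow> bool" where
  "concentrated V E T u v \<longleftrightarrow> five_center V T u v \<and>
     (\<forall>w\<in>V. {w, u} \<in> E \<and> gdist V T w u < gdist V T w v \<longrightarrow> {w, u} \<in> T) \<and>
     (\<forall>w\<in>V. {w, v} \<in> E \<and> gdist V T w v < gdist V T w u \<longrightarrow> {w, v} \<in> T)"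

end

theory Submission
  imports Defs
begin


lemma walk_single[simp]: "walk V E [x] \<longleftrightarrow> x \<in> V"
  by (simp add: walk_def)

lemma walk_Cons2[simp]:
  "walk V E (x # y # p) \<longleftrightarrow> x \<in> V \<and> {x,y} \<in> E \<and> walk V E (y # p)"
proof
  assume w: "walk V E (x # y # p)"
  have "Suc 0 < length (x # y # p)" by simp
  then have "{(x#y#p) ! 0, (x#y#p) ! Suc 0} \<in> E" using w unfolding walk_def by blast
  then have "{x,y} \<in> E" by simp
  moreover have "walk V E (y # p)" unfolding walk_def
  proof (intro conjI allI impI)
    show "set (y # p) \<subseteq> V" using w by (auto simp: walk_def)
    fix i assume "Suc i < length (y # p)"
    then have "Suc (Suc i) < length (x # y # p)" by simp
    then have "{(x#y#p) ! Suc i, (x#y#p) ! Suc (Suc i)} \<in> E" using w unfolding walk_def by blast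
    then show "{(y # p) ! i, (y # p) ! Suc i} \<in> E" by simp
  qed simp
  ultimately show "x \<in> V \<and> {x,y} \<in> E \<and> walk V E (y # p)" using w by (auto simp: walk_def)
next
  assume a: "x \<in> V \<and> {x,y} \<in> E \<and> walk V E (y # p)"
  show "walk V E (x # y # p)" unfolding walk_def
  proof (intro conjI allI impI)
    show "set (x # y # p) \<subseteq> V" using a by (auto simp: walk_def)
    fix i assume i: "Suc i < length (x # y # p)"
    show "{(x # y # p) ! i, (x # y # p) ! Suc i} \<in> E"
    proof (cases i)
      case 0 then show ?thesis using a by simp
    next
      case (Suc j)
      then have "Suc j < length (y # p)" using i by simp
      then have "{(y#p) ! j, (y#p) ! Suc j} \<in> E" using a unfolding walk_def by blast
      then show ?thesis using Suc by simp
    qed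
  qed simp
qed

lemma walk_nonempty: "walk V E p \<Longrightarrow> p \<noteq> []" by (simp add: walk_def)

lemma walk_hd_in: "walk V E p \<Longrightarrow> hd p \<in> V"
  by (cases p) (auto simp: walk_def)

lemma walk_last_in: "walk V E p \<Longrightarrow> last p \<in> V"
  by (auto simp: walk_def)

lemma walk_append:
  "walk V E p \<Longrightarrow> walk V E q \<Longrightarrow> last p = hd q \<Longrightarrow> walk V E (p @ tl q)"
proof (induction p rule: induct_list012)
  case 1 then show ?case by (simp add: walk_def)
next
  case (2 x) then show ?case by (cases q) auto
next
  case (3 x y zs)
  then show ?case by auto
qed

lemma walk_snoc: "walk V E p \<Longrightarrow> {last p, x} \<in> E \<Longrightarrow> x \<in> V \<Longrightarrow> walk V E (p @ [x])"
  using walk_append[of V E p "[last p, x]"] walk_last_in[of V E p] by simp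

lemma walk_rev: "walk V E p \<Longrightarrow> walk V E (rev p)"
proof (induction p rule: induct_list012)
  case 1 then show ?case by simp
next
  case (2 x) then show ?case by simp
next
  case (3 x y zs)
  then have "walk V E (rev (y # zs))" by simp
  moreover have "{last (rev (y#zs)), x} \<in> E" using 3 by (simp add: insert_commute)
  ultimately show ?case using 3 walk_snoc[of V E "rev (y#zs)" x] by simp
qed

lemma gdist_le_iff:
  "gdist V E a b \<le> enat n \<longleftrightarrow> (\<exists>p. walk V E p \<and> hd p = a \<and> last p = b \<and> length p \<le> Suc n)"
proof -
  have "gdist V E a b \<le> enat n \<longleftrightarrow> gdist V E a b < enat (Suc n)"
    by (cases "gdist V E a b") (simp_all add: less_Suc_eq_le)
  also have "\<dots> \<longleftrightarrow> (\<exists>p\<in>{p. walk V E p \<and> hd p = a \<and> last p = b}. enat (length p - 1) < enat (Suc n))"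
    unfolding gdist_def by (rule INF_less_iff)
  also have "\<dots> \<longleftrightarrow> (\<exists>p. walk V E p \<and> hd p = a \<and> last p = b \<and> length p \<le> Suc n)"
  proof -
    have "enat (length p - 1) < enat (Suc n) \<longleftrightarrow> length p \<le> Suc n" if "p \<noteq> []" for p :: "'a list"
      using that by (cases p) (simp_all add: less_Suc_eq_le)
    note eq = this
    show ?thesis
    proof
      assume "\<exists>p\<in>{p. walk V E p \<and> hd p = a \<and> last p = b}. enat (length p - 1) < enat (Suc n)"
      then obtain p where "walk V E p" "hd p = a" "last p = b" "enat (length p - 1) < enat (Suc n)" by blast
      then show "\<exists>p. walk V E p \<and> hd p = a \<and> last p = b \<and> length p \<le> Suc n"
        using eq[of p] walk_nonempty[of V E p] by blast
    next
      assume "\<exists>p. walk V E p \<and> hd p = a \<and> last p = b \<and> length p \<le> Suc n"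
      then obtain p where "walk V E p" "hd p = a" "last p = b" "length p \<le> Suc n" by blast
      then show "\<exists>p\<in>{p. walk V E p \<and> hd p = a \<and> last p = b}. enat (length p - 1) < enat (Suc n)"
        using eq[of p] walk_nonempty[of V E p] by blast
    qed
  qed
  finally show ?thesis .
qed




lemma gd_refl: "a \<in> V \<Longrightarrow> gdist V E a a \<le> enat 0"
  unfolding gdist_le_iff by (rule exI[of _ "[a]"]) simp

lemma gd_edge: "a \<in> V \<Longrightarrow> b \<in> V \<Longrightarrow> {a,b} \<in> E \<Longrightarrow> gdist V E a b \<le> enat 1"
  unfolding gdist_le_iff by (rule exI[of _ "[a,b]"]) simp

lemma gd_0: "gdist V E a b \<le> enat 0 \<Longrightarrow> a = b"
proof -
  assume "gdist V E a b \<le> enat 0"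
  then obtain p where p: "walk V E p" "hd p = a" "last p = b" "length p \<le> Suc 0"
    unfolding gdist_le_iff by blast
  then show ?thesis using walk_nonempty[OF p(1)] by (cases p) auto
qed

lemma gd_Suc: "gdist V E a b \<le> enat (Suc n) \<Longrightarrow> a = b \<or> (\<exists>c\<in>V. {a,c} \<in> E \<and> gdist V E c b \<le> enat n)"
proof -
  assume "gdist V E a b \<le> enat (Suc n)"
  then obtain p where p: "walk V E p" "hd p = a" "last p = b" "length p \<le> Suc (Suc n)"
    unfolding gdist_le_iff by blast
  show ?thesis
  proof (cases "tl p = []")
    case True
    then have "p = [hd p]" using walk_nonempty[OF p(1)] by (cases p) auto
    then show ?thesis using p by (metis last.simps)
  next
    case False
    then obtain y zs where pe: "p = a # y # zs" using p(2) walk_nonempty[OF p(1)]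
      by (cases p; cases "tl p") auto
    then have "gdist V E y b \<le> enat n" unfolding gdist_le_iff
      using p by (intro exI[of _ "y # zs"]) auto
    then show ?thesis using pe p walk_hd_in[of V E "y#zs"] by auto
  qed
qed

lemma enat_le_by_bounds: "(\<And>n. (y::enat) \<le> enat n \<Longrightarrow> x \<le> enat n) \<Longrightarrow> x \<le> y"
  by (cases y) auto

lemma gd_sym_le: "gdist V E a b \<le> gdist V E b a"
proof (rule enat_le_by_bounds)
  fix n assume "gdist V E b a \<le> enat n"
  then obtain p where p: "walk V E p" "hd p = b" "last p = a" "length p \<le> Suc n"
    unfolding gdist_le_iff by blast
  then show "gdist V E a b \<le> enat n" unfolding gdist_le_iff
    by (intro exI[of _ "rev p"]) (auto simp: walk_rev hd_rev last_rev)
qed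

lemma gd_sym: "gdist V E a b = gdist V E b a"
  using gd_sym_le by (metis antisym)

lemma gd_tri: "gdist V E a c \<le> gdist V E a b + gdist V E b c"
proof (cases "gdist V E a b")
  case (enat m)
  show ?thesis
  proof (cases "gdist V E b c")
    case (enat n)
    have "gdist V E a b \<le> enat m" "gdist V E b c \<le> enat n" using enat \<open>gdist V E a b = enat m\<close> by auto
    then obtain p q where p: "walk V E p" "hd p = a" "last p = b" "length p \<le> Suc m"
      and q: "walk V E q" "hd q = b" "last q = c" "length q \<le> Suc n"
      unfolding gdist_le_iff by blast
    have ne: "p \<noteq> []" "q \<noteq> []" using p q walk_nonempty by auto
    have "walk V E (p @ tl q)" using walk_append[OF p(1) q(1)] p(3) q(2) by simp
    moreover have "hd (p @ tl q) = a" using ne p by simp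
    moreover have "last (p @ tl q) = c" using ne p q by (cases q) auto
    moreover have "length (p @ tl q) \<le> Suc (m + n)" using ne p q by (cases q) auto
    ultimately have "gdist V E a c \<le> enat (m + n)" unfolding gdist_le_iff by blast
    then show ?thesis using \<open>gdist V E a b = enat m\<close> enat by simp
  qed (simp)
qed (simp)

lemma gd_pot:
  fixes g :: "'a \<Rightarrow> int"
  assumes "\<And>x y. x \<in> V \<Longrightarrow> y \<in> V \<Longrightarrow> {x,y} \<in> E \<Longrightarrow> \<bar>g x - g y\<bar> \<le> 1"
    and "gdist V E a b \<le> enat n"
  shows "\<bar>g a - g b\<bar> \<le> int n"
proof -
  obtain p where p: "walk V E p" "hd p = a" "last p = b" "length p \<le> Suc n"
    using assms(2) unfolding gdist_le_iff by blast
  have "walk V E p \<Longrightarrow> \<bar>g (hd p) - g (last p)\<bar> \<le> int (length p - 1)" for p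
  proof (induction p rule: induct_list012)
    case (3 x y zs)
    then have "\<bar>g x - g y\<bar> \<le> 1" using assms(1) by (auto simp: walk_def)
    then show ?case using 3 by auto
  qed (auto simp: walk_def)
  then have "\<bar>g a - g b\<bar> \<le> int (length p - 1)" using p by blast
  also have "\<dots> \<le> int n" using p(4) by simp
  finally show ?thesis .
qed

lemma spanner_lift:
  assumes "\<And>a b. a \<in> V \<Longrightarrow> b \<in> V \<Longrightarrow> {a,b} \<in> E \<Longrightarrow> gdist V T a b \<le> enat 3"
  shows "gdist V T a b \<le> 3 * gdist V E a b"
proof (cases "gdist V E a b")
  case (enat n)
  have "gdist V E a b \<le> enat n" using enat by simp
  then obtain p where p: "walk V E p" "hd p = a" "last p = b" "length p \<le> Suc n"
    unfolding gdist_le_iff by blast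
  have "walk V E p \<Longrightarrow> gdist V T (hd p) (last p) \<le> enat (3 * (length p - 1))" for p
  proof (induction p rule: induct_list012)
    case (2 x) then show ?case using gd_refl[of x V T] by simp
  next
    case (3 x y zs)
    have "gdist V T x (last (y#zs)) \<le> gdist V T x y + gdist V T y (last (y#zs))" by (rule gd_tri)
    also have "\<dots> \<le> enat 3 + enat (3 * (length (y#zs) - 1))"
    proof (intro add_mono)
      show "gdist V T x y \<le> enat 3" using 3(3) walk_hd_in[of V E "y#zs"] by (intro assms) auto
      show "gdist V T y (last (y # zs)) \<le> enat (3 * (length (y # zs) - 1))" using 3 by auto
    qed
    finally show ?case by simp
  qed (simp add: walk_def)
  then have "gdist V T a b \<le> enat (3 * (length p - 1))" using p by blast
  also have "\<dots> \<le> enat (3 * n)" using p(4) by simp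
  finally have "gdist V T a b \<le> enat (3 * n)" .
  then show ?thesis using enat by (simp add: numeral_eq_enat)
qed (simp add: numeral_eq_enat)




lemma parent_tree:
  fixes pr :: "'a \<Rightarrow> 'a" and rk :: "'a \<Rightarrow> nat"
  assumes fin: "finite V" and rho: "\<rho> \<in> V"
    and par: "\<And>x. x \<in> V \<Longrightarrow> x \<noteq> \<rho> \<Longrightarrow> pr x \<in> V \<and> rk (pr x) < rk x"
    and T: "T = {{x, pr x} | x. x \<in> V \<and> x \<noteq> \<rho>}"
  shows "is_tree V T"
proof -
  have edge: "{x, pr x} \<in> T" if "x \<in> V" "x \<noteq> \<rho>" for x using that unfolding T by blast
  have simple: "simple_graph V T"
    unfolding simple_graph_def
  proof (intro conjI ballI)
    fix e assume "e \<in> T"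
    then obtain x where x: "e = {x, pr x}" "x \<in> V" "x \<noteq> \<rho>" unfolding T by blast
    then have "pr x \<noteq> x" using par[of x] by auto
    then show "\<exists>a b. e = {a, b} \<and> a \<noteq> b \<and> a \<in> V \<and> b \<in> V" using x par[of x] by blast
  qed (rule fin)
  have reach: "x \<in> V \<Longrightarrow> gdist V T x \<rho> \<le> enat (rk x)" for x
  proof (induction "rk x" arbitrary: x rule: less_induct)
    case less
    show ?case
    proof (cases "x = \<rho>")
      case True then show ?thesis using gd_refl[of x V T] less.prems
        by (meson dual_order.trans enat_ord_simps(1) zero_le)
    next
      case False
      have "gdist V T x \<rho> \<le> gdist V T x (pr x) + gdist V T (pr x) \<rho>" by (rule gd_tri)
      also have "\<dots> \<le> enat 1 + enat (rk (pr x))"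
        using gd_edge[of x V "pr x" T] edge[of x] par[of x] less False by (intro add_mono) auto
      also have "\<dots> \<le> enat (rk x)" using par[of x] less False by simp
      finally show ?thesis .
    qed
  qed
  have conn: "connected_graph V T" unfolding connected_graph_def
  proof (intro ballI)
    fix a b assume ab: "a \<in> V" "b \<in> V"
    have "gdist V T a b \<le> gdist V T a \<rho> + gdist V T \<rho> b" by (rule gd_tri)
    also have "\<dots> \<le> enat (rk a) + enat (rk b)"
      using reach ab gd_sym[of V T \<rho> b] by (intro add_mono) auto
    finally have "gdist V T a b \<le> enat (rk a + rk b)" by simp
    then show "\<exists>p. walk V T p \<and> hd p = a \<and> last p = b" unfolding gdist_le_iff by blast
  qed
  have edge_cases: "y = pr x \<or> rk x < rk y" if "{x,y} \<in> T" for x y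
  proof -
    have "\<exists>z. {x,y} = {z, pr z} \<and> z \<in> V \<and> z \<noteq> \<rho>" using that unfolding T by simp
    then obtain z where z: "{x,y} = {z, pr z}" "z \<in> V" "z \<noteq> \<rho>" by blast
    from z(1) have "(x = z \<and> y = pr z) \<or> (x = pr z \<and> y = z)" by (simp only: doubleton_eq_iff)
    then show ?thesis
    proof
      assume "x = z \<and> y = pr z" then show ?thesis by simp
    next
      assume "x = pr z \<and> y = z" then show ?thesis using par[OF z(2,3)] by simp
    qed
  qed
  have acyc: "\<not> has_cycle V T"
  proof
    assume "has_cycle V T"
    then obtain p where p: "walk V T p" "distinct p" "length p \<ge> 3" "{last p, hd p} \<in> T"
      unfolding has_cycle_def by blast
    define n where "n = length p"
    have ne: "p \<noteq> []" using p by auto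
    have cyc: "{p ! i, p ! (if Suc i < n then Suc i else 0)} \<in> T" if "i < n" for i
    proof (cases "Suc i < n")
      case True then show ?thesis using p(1) unfolding walk_def n_def by auto
    next
      case False
      then have "i = n - 1" using that by auto
      then have "p ! i = last p" "p ! 0 = hd p" using ne n_def by (auto simp: last_conv_nth hd_conv_nth)
      then show ?thesis using False p(4) by auto
    qed
    have fs: "finite (rk ` set p)" by simp
    have "rk ` set p \<noteq> {}" using ne by simp
    then have "Max (rk ` set p) \<in> rk ` set p" using fs Max_in by blast
    then obtain x where x: "x \<in> set p" "rk x = Max (rk ` set p)" by auto
    then obtain i where i: "i < n" "p ! i = x" using n_def by (auto simp: in_set_conv_nth)
    have maxx: "rk (p ! j) \<le> rk x" if "j < n" for j
      using x fs that n_def by (auto intro: Max_ge)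
    define j1 where "j1 = (if Suc i < n then Suc i else 0)"
    define j2 where "j2 = (if i = 0 then n - 1 else i - 1)"
    have j1: "j1 < n" using i p(3) n_def j1_def by auto
    have j2: "j2 < n" using i p(3) n_def j2_def by auto
    have "(if Suc j2 < n then Suc j2 else 0) = i" using i p(3) n_def j2_def by auto
    then have e2: "{p ! j2, p ! i} \<in> T" using cyc[OF j2] by simp
    have e1: "{p ! i, p ! j1} \<in> T" using cyc[OF i(1)] j1_def by simp
    have "p ! j1 = pr x" using edge_cases[OF e1] maxx[OF j1] i by auto
    moreover have "p ! j2 = pr x" using edge_cases[of "p ! i" "p ! j2"] e2 maxx[OF j2] i
      by (auto simp: insert_commute)
    ultimately have "j1 = j2" using nth_eq_iff_index_eq[OF p(2), of j1 j2] j1 j2 n_def by simp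
    then show False using i p(3) n_def j1_def j2_def by (auto split: if_splits)
  qed
  show ?thesis unfolding is_tree_def using simple conn acyc by blast
qed




definition dd :: "'a set \<Rightarrow> 'a set set \<Rightarrow> 'a \<Rightarrow> 'a \<Rightarrow> nat" where
  "dd V T c x = the_enat (gdist V T x c)"

definition pa :: "'a set \<Rightarrow> 'a set set \<Rightarrow> 'a \<Rightarrow> 'a \<Rightarrow> 'a" where
  "pa V T c x = (SOME y. y \<in> V \<and> {x,y} \<in> T \<and> {y,c} \<in> T)"

lemma nocyc: "\<not> has_cycle V T \<Longrightarrow> walk V T p \<Longrightarrow> distinct p \<Longrightarrow> length p \<ge> 3 \<Longrightarrow> {last p, hd p} \<in> T \<Longrightarrow> False"
  unfolding has_cycle_def by blast

locale S =
  fixes V :: "'a set" and E T :: "'a set set" and u v :: 'a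
  assumes G: "simple_graph V E" and uvE: "{u,v} \<in> E"
    and sp: "tree_3_spanner V E T" and fc: "five_center V T u v"
begin

lemma TE: "T \<subseteq> E" using sp by (simp add: tree_3_spanner_def)
lemma tree: "is_tree V T" using sp by (simp add: tree_3_spanner_def)
lemma acyc: "\<not> has_cycle V T" using tree by (simp add: is_tree_def)
lemma uV: "u \<in> V" and vV: "v \<in> V" and uvT: "{u,v} \<in> T" using fc by (auto simp: five_center_def)

lemma noloopE: "{x,y} \<in> E \<Longrightarrow> x \<noteq> y"
  using G unfolding simple_graph_def by (metis doubleton_eq_iff insert_absorb2)

lemma noloopT: "{x,y} \<in> T \<Longrightarrow> x \<noteq> y" using TE noloopE by blast

lemma u_ne_v: "u \<noteq> v" using noloopE uvE by blast

lemma Tspan: "a \<in> V \<Longrightarrow> b \<in> V \<Longrightarrow> {a,b} \<in> E \<Longrightarrow> gdist V T a b \<le> enat 3"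
proof -
  assume ab: "a \<in> V" "b \<in> V" "{a,b} \<in> E"
  have "gdist V E a b \<le> enat 1" using gd_edge ab by metis
  then obtain k where k: "gdist V E a b = enat k" "k \<le> 1" by (cases "gdist V E a b") auto
  have "gdist V T a b \<le> 3 * gdist V E a b" using sp ab by (simp add: tree_3_spanner_def)
  also have "\<dots> = enat (3 * k)" using k by (simp add: numeral_eq_enat)
  also have "\<dots> \<le> enat 3" using k by simp
  finally show ?thesis .
qed

lemma fin: "x \<in> V \<Longrightarrow> c = u \<or> c = v \<Longrightarrow> gdist V T x c = enat (dd V T c x) \<and> dd V T c x \<le> 3"
proof -
  assume x: "x \<in> V" and c: "c = u \<or> c = v"
  have fc2: "gdist V T x u \<le> enat 2 \<or> gdist V T x v \<le> enat 2"
    using fc x unfolding five_center_def by (simp add: numeral_eq_enat)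
  have e1: "gdist V T v u \<le> enat 1" "gdist V T u v \<le> enat 1"
    using gd_edge uV vV uvT by (metis insert_commute)+
  have "gdist V T x u \<le> gdist V T x v + gdist V T v u" "gdist V T x v \<le> gdist V T x u + gdist V T u v"
    by (rule gd_tri)+
  note tri = this
  have "gdist V T x u \<le> enat 3 \<and> gdist V T x v \<le> enat 3"
  proof (cases "gdist V T x u \<le> enat 2")
    case True
    have "gdist V T x v \<le> enat 2 + enat 1" using tri(2) True e1(2) add_mono order_trans by metis
    then show ?thesis using True order_trans[OF True, of "enat 3"] by simp
  next
    case False
    then have v2: "gdist V T x v \<le> enat 2" using fc2 by blast
    have "gdist V T x u \<le> enat 2 + enat 1" using tri(1) v2 e1(1) add_mono order_trans by metis
    then show ?thesis using v2 order_trans[OF v2, of "enat 3"] by simp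
  qed
  then have le3: "gdist V T x c \<le> enat 3" using c by blast
  then obtain k where "gdist V T x c = enat k" "k \<le> 3" by (cases "gdist V T x c") auto
  then show ?thesis by (simp add: dd_def)
qed

lemma dd_le: "x \<in> V \<Longrightarrow> c = u \<or> c = v \<Longrightarrow> gdist V T x c \<le> enat n \<longleftrightarrow> dd V T c x \<le> n"
  using fin by simp

lemma d0: "x \<in> V \<Longrightarrow> c = u \<or> c = v \<Longrightarrow> dd V T c x = 0 \<longleftrightarrow> x = c"
proof
  assume x: "x \<in> V" and c: "c = u \<or> c = v" and "dd V T c x = 0"
  then have "gdist V T x c \<le> enat 0" using dd_le by simp
  then show "x = c" by (rule gd_0)
next
  assume x: "x \<in> V" and c: "c = u \<or> c = v" and "x = c"
  then have "gdist V T x c \<le> enat 0" using gd_refl by metis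
  then show "dd V T c x = 0" using dd_le[OF x c] by simp
qed

lemma dedge: "x \<in> V \<Longrightarrow> c = u \<or> c = v \<Longrightarrow> {x,c} \<in> T \<Longrightarrow> dd V T c x \<le> 1"
proof -
  assume x: "x \<in> V" and c: "c = u \<or> c = v" and e: "{x,c} \<in> T"
  have "c \<in> V" using c uV vV by blast
  then have "gdist V T x c \<le> enat 1" using gd_edge x e by metis
  then show ?thesis using dd_le[OF x c] by simp
qed

lemma dlip: "x \<in> V \<Longrightarrow> y \<in> V \<Longrightarrow> {x,y} \<in> T \<Longrightarrow> c = u \<or> c = v \<Longrightarrow> dd V T c x \<le> dd V T c y + 1"
proof -
  assume x: "x \<in> V" and y: "y \<in> V" and e: "{x,y} \<in> T" and c: "c = u \<or> c = v"
  have "gdist V T x c \<le> gdist V T x y + gdist V T y c" by (rule gd_tri)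
  also have "\<dots> \<le> enat 1 + enat (dd V T c y)" using gd_edge[OF x y e] fin[OF y c] by (intro add_mono) auto
  finally show ?thesis using fin[OF x c] by simp
qed

lemma d1: "x \<in> V \<Longrightarrow> c = u \<or> c = v \<Longrightarrow> dd V T c x = 1 \<Longrightarrow> {x,c} \<in> T \<and> x \<noteq> c"
proof -
  assume x: "x \<in> V" and c: "c = u \<or> c = v" and d: "dd V T c x = 1"
  then have "x \<noteq> c" using d0 by force
  have "gdist V T x c \<le> enat (Suc 0)" using d dd_le[OF x c] by simp
  then have "x = c \<or> (\<exists>y\<in>V. {x,y} \<in> T \<and> gdist V T y c \<le> enat 0)" by (rule gd_Suc)
  then obtain y where "{x,y} \<in> T" "gdist V T y c \<le> enat 0" using \<open>x \<noteq> c\<close> by blast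
  then show ?thesis using \<open>x \<noteq> c\<close> gd_0[of V T y c] by simp
qed

lemma d2: "x \<in> V \<Longrightarrow> c = u \<or> c = v \<Longrightarrow> dd V T c x = 2 \<Longrightarrow> \<exists>y\<in>V. {x,y} \<in> T \<and> {y,c} \<in> T"
proof -
  assume x: "x \<in> V" and c: "c = u \<or> c = v" and d: "dd V T c x = 2"
  then have "x \<noteq> c" using d0 by force
  have "gdist V T x c \<le> enat (Suc 1)" using d dd_le[OF x c] by simp
  then have "x = c \<or> (\<exists>y\<in>V. {x,y} \<in> T \<and> gdist V T y c \<le> enat 1)" by (rule gd_Suc)
  then obtain y where y: "y \<in> V" "{x,y} \<in> T" "gdist V T y c \<le> enat 1" using \<open>x \<noteq> c\<close> by blast
  have "y = c \<or> (\<exists>z\<in>V. {y,z} \<in> T \<and> gdist V T z c \<le> enat 0)" using y(3) gd_Suc[of V T y c 0] by simp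
  moreover have "y \<noteq> c"
  proof
    assume "y = c" then have "dd V T c x \<le> 1" using dedge x c y by simp
    then show False using d by simp
  qed
  ultimately obtain z where "{y,z} \<in> T" "gdist V T z c \<le> enat 0" by blast
  then have "{y,c} \<in> T" using gd_0[of V T z c] by simp
  then show ?thesis using y by blast
qed

lemma duv: "x \<in> V \<Longrightarrow> dd V T u x \<le> dd V T v x + 1 \<and> dd V T v x \<le> dd V T u x + 1"
proof -
  assume x: "x \<in> V"
  have "gdist V T x u \<le> gdist V T x v + gdist V T v u" "gdist V T x v \<le> gdist V T x u + gdist V T u v"
    by (rule gd_tri)+
  moreover have "gdist V T v u \<le> enat 1" "gdist V T u v \<le> enat 1"
    using gd_edge uV vV uvT by (metis insert_commute)+
  ultimately have "gdist V T x u \<le> gdist V T x v + enat 1" "gdist V T x v \<le> gdist V T x u + enat 1"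
    by (meson add_left_mono order_trans)+
  then show ?thesis using fin[OF x, of u] fin[OF x, of v] by simp
qed

lemma dfc: "x \<in> V \<Longrightarrow> dd V T u x \<le> 2 \<or> dd V T v x \<le> 2"
proof -
  assume x: "x \<in> V"
  have "gdist V T x u \<le> enat 2 \<or> gdist V T x v \<le> enat 2"
    using fc x unfolding five_center_def by (simp add: numeral_eq_enat)
  then show ?thesis using dd_le[OF x, of u] dd_le[OF x, of v] by simp
qed

lemma dvals: "dd V T u u = 0" "dd V T v v = 0" "dd V T u v = 1" "dd V T v u = 1"
proof -
  show a: "dd V T u u = 0" "dd V T v v = 0" using d0 uV vV by auto
  have "dd V T u v \<le> 1" "dd V T v u \<le> 1" using dedge uV vV uvT by (auto simp: insert_commute)
  moreover have "dd V T u v \<noteq> 0" "dd V T v u \<noteq> 0" using d0 uV vV u_ne_v by auto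
  ultimately show "dd V T u v = 1" "dd V T v u = 1" by auto
qed

end



context S begin

abbreviation "du \<equiv> dd V T u"
abbreviation "dv \<equiv> dd V T v"

lemma cycF: "walk V T p \<Longrightarrow> distinct p \<Longrightarrow> 3 \<le> length p \<Longrightarrow> {last p, hd p} \<in> T \<Longrightarrow> False"
  using nocyc acyc by blast

lemma Tsym: "{x,y} \<in> T \<Longrightarrow> {y,x} \<in> T" by (simp add: insert_commute)

lemma TV: "{x,y} \<in> T \<Longrightarrow> x \<in> V \<and> y \<in> V"
  using tree unfolding is_tree_def simple_graph_def by (metis doubleton_eq_iff)

lemma par11: "x \<in> V \<Longrightarrow> du x = 1 \<Longrightarrow> dv x = 1 \<Longrightarrow> False"
proof -
  assume x: "x \<in> V" "du x = 1" "dv x = 1"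
  then have a: "{x,u} \<in> T" "x \<noteq> u" "{x,v} \<in> T" "x \<noteq> v" using d1[of x u] d1[of x v] by auto
  show False
    by (rule cycF[of "[x,u,v]"]) (use a x uV vV uvT u_ne_v in \<open>auto simp: insert_commute\<close>)
qed

lemma parity: "x \<in> V \<Longrightarrow> du x \<noteq> dv x"
proof
  assume x: "x \<in> V" and eq: "du x = dv x"
  have "du x \<le> 2" using dfc[OF x] eq by auto
  then have "du x = 0 \<or> du x = 1 \<or> du x = 2" by linarith
  then consider "du x = 0" | "du x = 1" | "du x = 2" by (elim disjE) simp_all
  then show False
  proof cases
    case 1 then show False using eq d0[OF x, of u] d0[OF x, of v] u_ne_v by simp
  next
    case 2 then show False using eq par11 x by auto
  next
    case 3
    obtain y where y: "y \<in> V" "{x,y} \<in> T" "{y,u} \<in> T" using d2[OF x, of u] 3 by auto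
    obtain z where z: "z \<in> V" "{x,z} \<in> T" "{z,v} \<in> T" using d2[OF x, of v] 3 eq by auto
    have yu: "y \<noteq> u" using dedge[OF x, of u] y 3 by auto
    have zv: "z \<noteq> v" using dedge[OF x, of v] z 3 eq by auto
    have yv: "y \<noteq> v" using dedge[OF x, of v] y 3 eq by auto
    have zu: "z \<noteq> u" using dedge[OF x, of u] z 3 by auto
    have duy: "du y = 1" using dedge[OF y(1), of u] d0[OF y(1), of u] y yu by (auto simp: insert_commute)
    have dvz: "dv z = 1" using dedge[OF z(1), of v] d0[OF z(1), of v] z zv by (auto simp: insert_commute)
    have yz: "y \<noteq> z" using par11[OF y(1)] duy dvz by auto
    have xu: "x \<noteq> u" "x \<noteq> v" using d0[OF x, of u] d0[OF x, of v] 3 eq by auto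
    have xy: "x \<noteq> y" "x \<noteq> z" using noloopT y z by auto
    show False
      by (rule cycF[of "[x,y,u,v,z]"])
         (use x y z yu zv yv zu yz xu xy uvT u_ne_v uV vV in \<open>auto simp: insert_commute\<close>)
  qed
qed

lemma sideU: "x \<in> V \<Longrightarrow> du x < dv x \<Longrightarrow> du x \<le> 2 \<and> dv x = du x + 1"
  using duv[of x] dfc[of x] by auto

lemma sideW: "x \<in> V \<Longrightarrow> \<not> du x < dv x \<Longrightarrow> dv x < du x \<and> dv x \<le> 2 \<and> du x = dv x + 1"
  using duv[of x] dfc[of x] parity[of x] by auto

lemma pa_props:
  assumes x: "x \<in> V" "du x < dv x" "du x = 2"
  shows "pa V T u x \<in> V \<and> {x, pa V T u x} \<in> T \<and> {pa V T u x, u} \<in> T \<and> du (pa V T u x) = 1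
     \<and> dv (pa V T u x) = 2 \<and> pa V T u x \<noteq> u \<and> pa V T u x \<noteq> v"
proof -
  have "\<exists>y. y \<in> V \<and> {x,y} \<in> T \<and> {y,u} \<in> T" using d2[OF x(1), of u] x by auto
  then have p: "pa V T u x \<in> V" "{x, pa V T u x} \<in> T" "{pa V T u x, u} \<in> T"
    unfolding pa_def by (metis (mono_tags, lifting) someI_ex)+
  define y where "y = pa V T u x"
  have y: "y \<in> V" "{x,y} \<in> T" "{y,u} \<in> T" using p y_def by auto
  have yu: "y \<noteq> u" using dedge[OF x(1), of u] y x by auto
  have yv: "y \<noteq> v" using dedge[OF x(1), of v] y x sideU[OF x(1,2)] by auto
  have duy: "du y = 1" using dedge[OF y(1), of u] d0[OF y(1), of u] y yu by auto
  have "dv y \<noteq> 1" using parity[OF y(1)] duy by auto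
  moreover have "dv y \<noteq> 0" using d0[OF y(1), of v] yv by auto
  moreover have "dv y \<le> 2" using duv[OF y(1)] duy by auto
  ultimately have "dv y = 2" by auto
  then show ?thesis using y yu yv duy y_def by auto
qed

lemma cross:
  assumes x: "x \<in> V" "du x < dv x" and y: "y \<in> V" "\<not> du y < dv y" and e: "{x,y} \<in> T"
  shows "x = u \<and> y = v"
proof -
  have sx: "du x \<le> 2" "dv x = du x + 1" using sideU[OF x] by auto
  have sy: "dv y \<le> 2" "du y = dv y + 1" using sideW[OF y] by auto
  have "du y \<le> du x + 1" using dlip[OF y(1) x(1) Tsym[OF e], of u] by simp
  moreover have "dv x \<le> dv y + 1" using dlip[OF x(1) y(1) e, of v] by simp
  ultimately have k: "du x = dv y" using sx sy by auto
  have vals: "du u = 0" "dv v = 0" "du v = 1" "dv u = 1" using dvals by auto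
  have "du x = 0 \<or> du x = 1 \<or> du x = 2" using sx by linarith
  then consider "du x = 0" | "du x = 1" | "du x = 2" by (elim disjE) simp_all
  then show ?thesis
  proof cases
    case 1 then show ?thesis using k d0[OF x(1), of u] d0[OF y(1), of v] by auto
  next
    case 2
    have a: "{x,u} \<in> T" "{y,v} \<in> T" using d1[OF x(1), of u] d1[OF y(1), of v] 2 k by auto
    have "distinct [x,u,v,y]" using 2 k sx sy vals by (auto dest: arg_cong[where f=du] arg_cong[where f=dv])
    then show ?thesis
      using cycF[of "[x,u,v,y]"] a e x y uV vV uvT by (auto simp: insert_commute)
  next
    case 3
    define px where "px = pa V T u x"
    have px: "px \<in> V" "{x,px} \<in> T" "{px,u} \<in> T" "du px = 1" "dv px = 2"
      using pa_props[OF x 3] px_def by auto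
    obtain z where z: "z \<in> V" "{y,z} \<in> T" "{z,v} \<in> T" using d2[OF y(1), of v] 3 k by auto
    have zv: "z \<noteq> v" using dedge[OF y(1), of v] z 3 k by auto
    have zu: "z \<noteq> u" using dedge[OF y(1), of u] z 3 k sy by auto
    have dvz: "dv z = 1" using dedge[OF z(1), of v] d0[OF z(1), of v] z zv by auto
    have "du z \<noteq> 1" using parity[OF z(1)] dvz by auto
    moreover have "du z \<noteq> 0" using d0[OF z(1), of u] zu by auto
    moreover have "du z \<le> 2" using duv[OF z(1)] dvz by auto
    ultimately have duz: "du z = 2" by auto
    have "distinct [x,px,u,v,z,y]" using 3 k sx sy vals px dvz duz
      by (auto dest: arg_cong[where f=du] arg_cong[where f=dv])
    then show ?thesis
      using cycF[of "[x,px,u,v,z,y]"] px z e x y uV vV uvT by (auto simp: insert_commute)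
  qed
qed

lemma nb:
  assumes x: "x \<in> V" "du x < dv x" "du x = 2" and y: "y \<in> V" "{x,y} \<in> T"
  shows "y = pa V T u x"
proof -
  define px where "px = pa V T u x"
  have px: "px \<in> V" "{x,px} \<in> T" "{px,u} \<in> T" "du px = 1" "dv px = 2"
    using pa_props[OF x] px_def by auto
  have yU: "du y < dv y"
  proof (rule ccontr)
    assume "\<not> du y < dv y"
    then have "x = u" using cross[OF x(1,2) y(1)] y by auto
    then show False using x dvals by auto
  qed
  have yu: "y \<noteq> u" using dedge[OF x(1), of u] y x by auto
  have "du y \<noteq> 0" using d0[OF y(1), of u] yu by auto
  moreover have "du y \<le> 2" using sideU[OF y(1) yU] by auto
  ultimately have "du y = 1 \<or> du y = 2" by linarith
  then consider "du y = 1" | "du y = 2" by (elim disjE) simp_all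
  then show ?thesis
  proof cases
    case 1
    have yuT: "{y,u} \<in> T" using d1[OF y(1), of u] 1 by auto
    show ?thesis
    proof (rule ccontr)
      assume ne: "y \<noteq> pa V T u x"
      have "distinct [x,y,u,px]" using ne px_def 1 px x dvals noloopT[OF y(2)]
        by (auto dest: arg_cong[where f=du])
      then show False using cycF[of "[x,y,u,px]"] px y yuT x uV by (auto simp: insert_commute)
    qed
  next
    case 2
    define py where "py = pa V T u y"
    have py: "py \<in> V" "{y,py} \<in> T" "{py,u} \<in> T" "du py = 1"
      using pa_props[OF y(1) yU 2] py_def by auto
    have xy: "x \<noteq> y" using noloopT[OF y(2)] .
    show ?thesis
    proof (cases "px = py")
      case True
      have "distinct [x,y,px]" using xy px 2 x by (auto dest: arg_cong[where f=du])
      then have False using cycF[of "[x,y,px]"] px py y x True by (auto simp: insert_commute)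
      then show ?thesis ..
    next
      case False
      have "distinct [x,y,py,u,px]" using xy False px py 2 x dvals by (auto dest: arg_cong[where f=du])
      then have False using cycF[of "[x,y,py,u,px]"] px py y x uV by (auto simp: insert_commute)
      then show ?thesis ..
    qed
  qed
qed

lemma same_parent:
  assumes a: "a \<in> V" "du a < dv a" "du a = 2" and b: "b \<in> V" "du b < dv b" "du b = 2"
    and e: "{a,b} \<in> E"
  shows "pa V T u a = pa V T u b"
proof -
  have pa: "pa V T u a \<in> V" "{pa V T u a, u} \<in> T" "du (pa V T u a) = 1"
    using pa_props[OF a] by auto
  have pb: "pa V T u b \<in> V" "{pa V T u b, u} \<in> T" "du (pa V T u b) = 1"
    using pa_props[OF b] by auto
  have ab: "a \<noteq> b" using noloopE[OF e] .
  have "gdist V T a b \<le> enat (Suc 2)" using Tspan[OF a(1) b(1) e] by (simp add: numeral_eq_enat)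
  then have "a = b \<or> (\<exists>c\<in>V. {a,c} \<in> T \<and> gdist V T c b \<le> enat 2)" by (rule gd_Suc)
  then obtain c where c: "c \<in> V" "{a,c} \<in> T" "gdist V T c b \<le> enat 2" using ab by auto
  have ca: "c = pa V T u a" using nb[OF a c(1,2)] .
  have "c = b \<or> (\<exists>d\<in>V. {c,d} \<in> T \<and> gdist V T d b \<le> enat 1)" using gd_Suc[of V T c b 1] c(3) by (simp add: numeral_2_eq_2)
  moreover have "c \<noteq> b" using ca pa b by auto
  ultimately obtain d where d: "d \<in> V" "{c,d} \<in> T" "gdist V T d b \<le> enat 1" by auto
  have "d = b \<or> (\<exists>e\<in>V. {d,e} \<in> T \<and> gdist V T e b \<le> enat 0)" using gd_Suc[of V T d b 0] d(3) by simp
  then show ?thesis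
  proof
    assume "d = b"
    then have "c = pa V T u b" using nb[OF b c(1)] d(2) by (simp add: insert_commute)
    then show ?thesis using ca by simp
  next
    assume "\<exists>w\<in>V. {d,w} \<in> T \<and> gdist V T w b \<le> enat 0"
    then obtain w where "{d,w} \<in> T" "gdist V T w b \<le> enat 0" by auto
    then have "{d,b} \<in> T" using gd_0[of V T w b] by simp
    then have db: "d = pa V T u b" using nb[OF b d(1)] by (simp add: insert_commute)
    show ?thesis
    proof (rule ccontr)
      assume ne: "pa V T u a \<noteq> pa V T u b"
      have "distinct [c,d,u]" using ne ca db pa pb dvals by (auto dest: arg_cong[where f=du])
      then show False using cycF[of "[c,d,u]"] d c pa pb ca db uV by (auto simp: insert_commute)
    qed
  qed
qed

end



context S begin

lemma swapped: "S V E T v u"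
proof
  show "simple_graph V E" by (rule G)
  show "{v,u} \<in> E" using uvE by (simp add: insert_commute)
  show "tree_3_spanner V E T" by (rule sp)
  show "five_center V T v u" using fc unfolding five_center_def by (auto simp: insert_commute)
qed

lemma du2: "x \<in> V \<Longrightarrow> du x < dv x \<Longrightarrow> x \<noteq> u \<Longrightarrow> {x,u} \<notin> E \<Longrightarrow> du x = 2"
proof -
  assume x: "x \<in> V" "du x < dv x" "x \<noteq> u" "{x,u} \<notin> E"
  have "du x \<noteq> 0" using d0[OF x(1), of u] x by simp
  moreover have "du x \<noteq> 1" using d1[OF x(1), of u] x TE by auto
  moreover have "du x \<le> 2" using sideU[OF x(1,2)] by simp
  ultimately show ?thesis by linarith
qed

lemma main: "\<exists>T'. tree_3_spanner V E T' \<and> concentrated V E T' u v"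
proof -
  interpret B: S V E T v u by (rule swapped)
  define pr where "pr x = (if du x < dv x then (if x = u then v else if {x,u} \<in> E then u else pa V T u x)
      else (if {x,v} \<in> E then v else pa V T v x))" for x
  define rk where "rk x = (if du x < dv x then (if x = u then 1 else if {x,u} \<in> E then 2 else 3)
      else (if x = v then 0 else if {x,v} \<in> E then 1 else (2::nat)))" for x
  define T' where "T' = {{x, pr x} | x. x \<in> V \<and> x \<noteq> v}"
  have vals: "du u = 0" "dv v = 0" "du v = 1" "dv u = 1" using dvals by auto
  have uU: "du u < dv u" and vW: "\<not> du v < dv v" using vals by auto
  have rku: "rk u = 1" and rkv: "rk v = 0" using uU vW u_ne_v by (auto simp: rk_def)
  have prU3: "pr x = pa V T u x \<and> du x = 2 \<and> rk x = 3"
    if "x \<in> V" "du x < dv x" "x \<noteq> u" "{x,u} \<notin> E" for x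
    using that du2[OF that] by (simp add: pr_def rk_def)
  have prW2: "pr x = pa V T v x \<and> dv x = 2 \<and> rk x = 2"
    if "x \<in> V" "\<not> du x < dv x" "x \<noteq> v" "{x,v} \<notin> E" for x
  proof -
    have "dv x < du x" using sideW[OF that(1,2)] by simp
    then have "dv x = 2" using B.du2[of x] that by (simp add: insert_commute)
    then show ?thesis using that by (simp add: pr_def rk_def)
  qed
  have key: "pr x \<in> V \<and> {x, pr x} \<in> E \<and> rk (pr x) + 1 = rk x \<and>
      ((x = u \<and> pr x = v) \<or> (du (pr x) < dv (pr x) \<longleftrightarrow> du x < dv x))"
    if x: "x \<in> V" "x \<noteq> v" for x
  proof (cases "du x < dv x")
    case True
    show ?thesis
    proof (cases "x = u")
      case True
      then show ?thesis using vV uvE rku rkv by (simp add: pr_def uU)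
    next
      case xu: False
      show ?thesis
      proof (cases "{x,u} \<in> E")
        case True
        then show ?thesis using \<open>du x < dv x\<close> xu uV rku uU by (simp add: pr_def rk_def)
      next
        case False
        have p: "pr x = pa V T u x" "du x = 2" "rk x = 3" using prU3[OF x(1) \<open>du x < dv x\<close> xu False] by auto
        define y where "y = pa V T u x"
        have y: "y \<in> V" "{x,y} \<in> T" "{y,u} \<in> T" "du y = 1" "dv y = 2" "y \<noteq> u" "y \<noteq> v"
          using pa_props[OF x(1) \<open>du x < dv x\<close> p(2)] y_def by auto
        have "{y,u} \<in> E" using y TE by auto
        then have "rk y = 2" using y by (simp add: rk_def)
        then show ?thesis using p y_def y TE \<open>du x < dv x\<close> by auto
      qed
    qed
  next
    case False
    show ?thesis
    proof (cases "{x,v} \<in> E")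
      case True
      then show ?thesis using False x vV rkv vW by (simp add: pr_def rk_def)
    next
      case nE: False
      have p: "pr x = pa V T v x" "dv x = 2" "rk x = 2" using prW2[OF x(1) False x(2) nE] by auto
      have dvx: "dv x < du x" using sideW[OF x(1) False] by simp
      define y where "y = pa V T v x"
      have y: "y \<in> V" "{x,y} \<in> T" "{y,v} \<in> T" "dv y = 1" "du y = 2" "y \<noteq> v" "y \<noteq> u"
        using B.pa_props[OF x(1) dvx p(2)] y_def by auto
      have "{y,v} \<in> E" using y TE by auto
      then have "rk y = 1" using y by (simp add: rk_def)
      then show ?thesis using p y_def y TE False by auto
    qed
  qed
  have finV: "finite V" using G by (simp add: simple_graph_def)
  have parok: "pr x \<in> V \<and> rk (pr x) < rk x" if "x \<in> V" "x \<noteq> v" for x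
    using key[OF that] by linarith
  have treeT': "is_tree V T'" by (rule parent_tree[OF finV vV parok T'_def])
  have edgeT': "{x, pr x} \<in> T'" if "x \<in> V" "x \<noteq> v" for x using that T'_def by blast
  have T'E: "T' \<subseteq> E" using key unfolding T'_def by blast
  have uvT': "{u,v} \<in> T'" using edgeT'[OF uV u_ne_v] uU by (simp add: pr_def)
  have ubU: "x \<in> V \<Longrightarrow> du x < dv x \<Longrightarrow> gdist V T' x u \<le> enat (rk x - 1)" for x
  proof (induction "rk x" arbitrary: x rule: less_induct)
    case less
    show ?case
    proof (cases "x = u")
      case True then show ?thesis using gd_refl[of u V T'] uV rku by simp
    next
      case False
      have xv: "x \<noteq> v" using less vW by auto
      have k: "pr x \<in> V" "rk (pr x) + 1 = rk x" "du (pr x) < dv (pr x)" using key[OF less(2) xv] less False by auto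
      have "rk (pr x) \<ge> 1" using k by (auto simp: rk_def split: if_splits)
      have "gdist V T' x u \<le> gdist V T' x (pr x) + gdist V T' (pr x) u" by (rule gd_tri)
      also have "\<dots> \<le> enat 1 + enat (rk (pr x) - 1)"
        using gd_edge[OF less(2) k(1) edgeT'[OF less(2) xv]] less(1)[of "pr x"] k by (intro add_mono) auto
      also have "\<dots> = enat (rk x - 1)" using k \<open>rk (pr x) \<ge> 1\<close> by simp
      finally show ?thesis .
    qed
  qed
  have ubW: "x \<in> V \<Longrightarrow> \<not> du x < dv x \<Longrightarrow> gdist V T' x v \<le> enat (rk x)" for x
  proof (induction "rk x" arbitrary: x rule: less_induct)
    case less
    show ?case
    proof (cases "x = v")
      case True then show ?thesis using gd_refl[of v V T'] vV rkv by simp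
    next
      case False
      have xu: "x \<noteq> u" using less uU by auto
      have k: "pr x \<in> V" "rk (pr x) + 1 = rk x" "\<not> du (pr x) < dv (pr x)" using key[OF less(2) False] less xu by auto
      have "gdist V T' x v \<le> gdist V T' x (pr x) + gdist V T' (pr x) v" by (rule gd_tri)
      also have "\<dots> \<le> enat 1 + enat (rk (pr x))"
        using gd_edge[OF less(2) k(1) edgeT'[OF less(2) False]] less(1)[of "pr x"] k by (intro add_mono) auto
      also have "\<dots> = enat (rk x)" using k by simp
      finally show ?thesis .
    qed
  qed
  define g where "g x = (if du x < dv x then - int (rk x) else int (rk x))" for x
  have glip: "\<bar>g a - g b\<bar> \<le> 1" if ab: "a \<in> V" "b \<in> V" "{a,b} \<in> T'" for a b
  proof -
    obtain x where x: "{a,b} = {x, pr x}" "x \<in> V" "x \<noteq> v" using ab(3) unfolding T'_def by blast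
    have "\<bar>g x - g (pr x)\<bar> \<le> 1"
    proof (cases "x = u \<and> pr x = v")
      case True then have "x = u" "pr x = v" by auto
      then show ?thesis using rku rkv uU vW by (simp add: g_def)
    next
      case False
      then have "rk (pr x) + 1 = rk x" "du (pr x) < dv (pr x) \<longleftrightarrow> du x < dv x" using key[OF x(2,3)] by auto
      then show ?thesis by (auto simp: g_def)
    qed
    moreover have "(a = x \<and> b = pr x) \<or> (a = pr x \<and> b = x)" using x(1) by (simp only: doubleton_eq_iff)
    ultimately show ?thesis by auto
  qed
  have gu: "g u = -1" and gv: "g v = 0" using rku rkv uU vW by (auto simp: g_def)
  have lbU: "rk w + 1 \<le> n" if "w \<in> V" "\<not> du w < dv w" "gdist V T' w u \<le> enat n" for w n
    using gd_pot[of V T' g w u n, OF glip that(3)] that gu by (simp add: g_def)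
  have lbV: "rk w \<le> n" if "w \<in> V" "du w < dv w" "gdist V T' w v \<le> enat n" for w n
    using gd_pot[of V T' g w v n, OF glip that(3)] that gv by (simp add: g_def)
  have rkU: "1 \<le> rk x \<and> rk x \<le> 3 \<and> rk x - 1 \<le> du x" if "x \<in> V" "du x < dv x" for x
  proof -
    have "x \<noteq> u \<Longrightarrow> du x \<ge> 1" using d0[OF that(1), of u] by auto
    then show ?thesis using that prU3[OF that] rku by (auto simp: rk_def)
  qed
  have rkW: "rk x \<le> 2 \<and> rk x \<le> dv x" if "x \<in> V" "\<not> du x < dv x" for x
  proof -
    have "x \<noteq> v \<Longrightarrow> dv x \<ge> 1" using d0[OF that(1), of v] by auto
    then show ?thesis using that prW2[OF that] rkv by (auto simp: rk_def)
  qed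
  have fcT': "five_center V T' u v"
    unfolding five_center_def
  proof (intro conjI ballI uV vV uvT')
    fix w assume w: "w \<in> V"
    show "gdist V T' w u \<le> 2 \<or> gdist V T' w v \<le> 2"
    proof (cases "du w < dv w")
      case True
      have "gdist V T' w u \<le> enat (rk w - 1)" using ubU w True by blast
      moreover have "rk w - 1 \<le> 2" using rkU[OF w True] by auto
      ultimately have "gdist V T' w u \<le> enat 2" by (meson enat_ord_simps(1) order_trans)
      then show ?thesis by (simp add: numeral_eq_enat)
    next
      case False
      have "gdist V T' w v \<le> enat (rk w)" using ubW w False by blast
      moreover have "rk w \<le> 2" using rkW[OF w False] by auto
      ultimately have "gdist V T' w v \<le> enat 2" by (meson enat_ord_simps(1) order_trans)
      then show ?thesis by (simp add: numeral_eq_enat)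
    qed
  qed
  have c2: "{w,u} \<in> T'" if w: "w \<in> V" "{w,u} \<in> E" "gdist V T' w u < gdist V T' w v" for w
  proof (cases "du w < dv w")
    case True
    have "w \<noteq> u" using noloopE w(2) by blast
    moreover have "w \<noteq> v" using True vW by auto
    ultimately show ?thesis using edgeT'[OF w(1)] True w(2) by (simp add: pr_def)
  next
    case False
    have "gdist V T' w v \<le> enat (rk w)" using ubW w(1) False by blast
    then have "gdist V T' w u < enat (rk w)" using w(3) by (meson order_less_le_trans)
    then obtain n where n: "gdist V T' w u = enat n" "n < rk w" by (cases "gdist V T' w u") auto
    then have "rk w + 1 \<le> n" using lbU[OF w(1) False] by simp
    then show ?thesis using n by simp
  qed
  have c3: "{w,v} \<in> T'" if w: "w \<in> V" "{w,v} \<in> E" "gdist V T' w v < gdist V T' w u" for w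
  proof (cases "du w < dv w")
    case False
    have "w \<noteq> v" using noloopE w(2) by blast
    then show ?thesis using edgeT'[OF w(1)] False w(2) by (simp add: pr_def)
  next
    case True
    have "gdist V T' w u \<le> enat (rk w - 1)" using ubU w(1) True by blast
    then have "gdist V T' w v < enat (rk w - 1)" using w(3) by (meson order_less_le_trans)
    then obtain n where n: "gdist V T' w v = enat n" "n < rk w - 1" by (cases "gdist V T' w v") auto
    then have "rk w \<le> n" using lbV[OF w(1) True] by simp
    then show ?thesis using n by simp
  qed
  have conc: "concentrated V E T' u v"
    unfolding concentrated_def using fcT' c2 c3 by blast
  define gT where "gT x = (if du x < dv x then - int (du x) else int (dv x) + 1)" for x
  have gTlip: "\<bar>gT a - gT b\<bar> \<le> 1" if "a \<in> V" "b \<in> V" "{a,b} \<in> T" for a b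
  proof (cases "du a < dv a"; cases "du b < dv b")
    assume "du a < dv a" "du b < dv b"
    then show ?thesis using dlip[OF that, of u] dlip[OF that(2,1) Tsym[OF that(3)], of u] by (auto simp: gT_def)
  next
    assume "\<not> du a < dv a" "\<not> du b < dv b"
    then show ?thesis using dlip[OF that, of v] dlip[OF that(2,1) Tsym[OF that(3)], of v] by (auto simp: gT_def)
  next
    assume "du a < dv a" "\<not> du b < dv b"
    then have "a = u" "b = v" using cross[OF that(1) _ that(2) _ that(3)] by auto
    then show ?thesis using vals by (simp add: gT_def)
  next
    assume "\<not> du a < dv a" "du b < dv b"
    then have "b = u" "a = v" using cross[OF that(2) _ that(1) _ Tsym[OF that(3)]] by auto
    then show ?thesis using vals by (simp add: gT_def)
  qed
  have duv': "gdist V T' u v \<le> enat 1" using gd_edge[OF uV vV uvT'] .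
  have mixed: "gdist V T' a b \<le> enat 3"
    if ab: "a \<in> V" "b \<in> V" "{a,b} \<in> E" "du a < dv a" "\<not> du b < dv b" for a b
  proof -
    have "\<bar>gT a - gT b\<bar> \<le> 3" using gd_pot[of V T gT a b 3, OF gTlip Tspan[OF ab(1-3)]] by simp
    then have s: "du a + dv b \<le> 2" using ab(4,5) by (simp add: gT_def)
    have "gdist V T' a b \<le> gdist V T' a u + gdist V T' u b" by (rule gd_tri)
    also have "\<dots> \<le> gdist V T' a u + (gdist V T' u v + gdist V T' v b)" by (intro add_left_mono gd_tri)
    also have "\<dots> \<le> enat (rk a - 1) + (enat 1 + enat (rk b))"
      using ubU[OF ab(1,4)] duv' ubW[OF ab(2,5)] gd_sym[of V T' v b] by (intro add_mono) auto
    also have "\<dots> \<le> enat 3" using rkU[OF ab(1,4)] rkW[OF ab(2,5)] s by (simp; linarith)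
    finally show ?thesis .
  qed
  have ebound: "gdist V T' a b \<le> enat 3" if ab: "a \<in> V" "b \<in> V" "{a,b} \<in> E" for a b
  proof (cases "du a < dv a"; cases "du b < dv b")
    assume a: "du a < dv a" and b: "du b < dv b"
    show ?thesis
    proof (cases "rk a + rk b \<le> 5")
      case True
      have "gdist V T' a b \<le> gdist V T' a u + gdist V T' u b" by (rule gd_tri)
      also have "\<dots> \<le> enat (rk a - 1) + enat (rk b - 1)"
        using ubU[OF ab(1) a] ubU[OF ab(2) b] gd_sym[of V T' u b] by (intro add_mono) auto
      also have "\<dots> \<le> enat 3" using True rkU[OF ab(1) a] rkU[OF ab(2) b] by (simp; linarith)
      finally show ?thesis .
    next
      case False
      then have r: "rk a = 3" "rk b = 3" using rkU[OF ab(1) a] rkU[OF ab(2) b] by auto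
      have na: "a \<noteq> u" "{a,u} \<notin> E" using r a rku by (auto simp: rk_def split: if_splits)
      have nb': "b \<noteq> u" "{b,u} \<notin> E" using r b rku by (auto simp: rk_def split: if_splits)
      have pa: "pr a = pa V T u a" "du a = 2" using prU3[OF ab(1) a na] by auto
      have pb: "pr b = pa V T u b" "du b = 2" using prU3[OF ab(2) b nb'] by auto
      have same: "pr a = pr b" using same_parent[OF ab(1) a pa(2) ab(2) b pb(2) ab(3)] pa pb by simp
      have av: "a \<noteq> v" "b \<noteq> v" using a b vW by auto
      have k: "pr a \<in> V" using key[OF ab(1) av(1)] by auto
      have "gdist V T' a b \<le> gdist V T' a (pr a) + gdist V T' (pr a) b" by (rule gd_tri)
      also have "\<dots> \<le> enat 1 + enat 1"
        using gd_edge[OF ab(1) k edgeT'[OF ab(1) av(1)]] gd_edge[OF ab(2) k] edgeT'[OF ab(2) av(2)]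
          same gd_sym[of V T' "pr a" b] by (intro add_mono) auto
      finally have le2: "gdist V T' a b \<le> enat 1 + enat 1" .
      show ?thesis using order_trans[OF le2, of "enat 3"] by simp
    qed
  next
    assume "du a < dv a" "\<not> du b < dv b"
    then show ?thesis using mixed ab by blast
  next
    assume "\<not> du a < dv a" "du b < dv b"
    then have "gdist V T' b a \<le> enat 3" using mixed ab by (simp add: insert_commute)
    then show ?thesis using gd_sym[of V T' a b] by simp
  next
    assume a: "\<not> du a < dv a" and b: "\<not> du b < dv b"
    show ?thesis
    proof (cases "rk a + rk b \<le> 3")
      case True
      have "gdist V T' a b \<le> gdist V T' a v + gdist V T' v b" by (rule gd_tri)
      also have "\<dots> \<le> enat (rk a) + enat (rk b)"
        using ubW[OF ab(1) a] ubW[OF ab(2) b] gd_sym[of V T' v b] by (intro add_mono) auto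
      also have "\<dots> \<le> enat 3" using True by simp
      finally show ?thesis .
    next
      case False
      then have r: "rk a = 2" "rk b = 2" using rkW[OF ab(1) a] rkW[OF ab(2) b] by auto
      have na: "a \<noteq> v" "{a,v} \<notin> E" using r a rkv by (auto simp: rk_def split: if_splits)
      have nb': "b \<noteq> v" "{b,v} \<notin> E" using r b rkv by (auto simp: rk_def split: if_splits)
      have pa: "pr a = pa V T v a" "dv a = 2" using prW2[OF ab(1) a na] by auto
      have pb: "pr b = pa V T v b" "dv b = 2" using prW2[OF ab(2) b nb'] by auto
      have a': "dv a < du a" using sideW[OF ab(1) a] by simp
      have b': "dv b < du b" using sideW[OF ab(2) b] by simp
      have same: "pr a = pr b" using B.same_parent[OF ab(1) a' pa(2) ab(2) b' pb(2) ab(3)] pa pb by simp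
      have k: "pr a \<in> V" using key[OF ab(1) na(1)] by auto
      have "gdist V T' a b \<le> gdist V T' a (pr a) + gdist V T' (pr a) b" by (rule gd_tri)
      also have "\<dots> \<le> enat 1 + enat 1"
        using gd_edge[OF ab(1) k edgeT'[OF ab(1) na(1)]] gd_edge[OF ab(2) k] edgeT'[OF ab(2) nb'(1)]
          same gd_sym[of V T' "pr a" b] by (intro add_mono) auto
      finally have le2: "gdist V T' a b \<le> enat 1 + enat 1" .
      show ?thesis using order_trans[OF le2, of "enat 3"] by simp
    qed
  qed
  have "tree_3_spanner V E T'"
    unfolding tree_3_spanner_def
    using T'E treeT' spanner_lift[of V E T', OF ebound] by blast
  then show ?thesis using conc by blast
qed

end


theorem lemma2:
  fixes V :: "'a set" and E :: "'a set set" and u v :: 'a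
  assumes "simple_graph V E"
    and "{u, v} \<in> E"
    and "\<exists>T. tree_3_spanner V E T \<and> five_center V T u v"
  shows "\<exists>T. tree_3_spanner V E T \<and> concentrated V E T u v"
proof -
  obtain T where T: "tree_3_spanner V E T" "five_center V T u v" using assms(3) by blast
  interpret S V E T u v using assms(1,2) T by unfold_locales
  show ?thesis by (rule main)
qed

end
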